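(* Let $\tau\subset\mathbb{Z}^n_{\ge0}$ be a B-facet and let $E\subset\mathbb{R}^n$ be a coordinate subspace such that $E\cap\tau$ is a V-face of $\tau$ contained in $E$ (so $\dim E=\dim(E\cap\tau)+1$) which is not a B-face. Let $p_E:\mathbb{Z}^n\to\mathbb{Z}^{n-\dim E}$ be the projection forgetting the coordinates belonging to $E$. Then $p_E(\tau)\subset\mathbb{Z}^{n-\dim E}_{\ge0}$ is a B-polytope.
   Context: A polytope is a finite subset of $\mathbb{Z}^n$; its dimension is the dimension of its affine span; a face of a finite set $S$ is $S\cap G$ for a face $G$ of the convex hull of $S$. A $k$-simplex is a set of $k+1$ affinely independent points; a $k$-simplex $S\subset\mathbb{Z}^m_{\ge0}$ is a B-simplex if there is an index $i$ with exactly $k$ vertices in $\{x_i=0\}$ and the remaining vertex having $x_i=1$. A B-facet in $\mathbb{Z}^n_{\ge0}$ is a finite set $\tau\subset\mathbb{Z}^n_{\ge0}$ whose affine span is a hyperplane $\{\langle a,x\rangle=b\}$ with all $a_j>0$, such that every $(n-1)$-simplex with vertices in $\tau$ is a B-simplex. A coordinate subspace is the linear span of some standard basis vectors. A face $F$ of $\tau$ is a V-face if it is contained in a coordinate subspace $E$ with $\dim E=\dim F+1$; such $F$ is a B-face if every $(\dim F)$-simplex with vertices in $F$ is a B-simplex when regarded in $\mathbb{Z}^{\dim E}_{\ge0}$ via the coordinates of $E$. A B-polytope in $\mathbb{Z}^m_{\ge0}$ is a finite set $P\subset\mathbb{Z}^m_{\ge0}$ of dimension $m$ such that every $(m-1)$-simplex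 with vertices in $P$ either is a B-simplex or has affine span containing the origin. *)

theory Defs
  imports "HOL-Analysis.Analysis"
begin

text \<open>Points of Z^n are modelled as real vectors in real^'n with integer coordinates,
  n = CARD('n). For a set J of coordinates, lattice_orth J is the copy of Z^J_{>=0}
  (integer, nonnegative on J, zero off J).\<close>

definition lattice_orth :: "'n set \<Rightarrow> (real^'n) set" where
  "lattice_orth J = {x. (\<forall>i\<in>J. x$i \<in> \<int> \<and> x$i \<ge> 0) \<and> (\<forall>i. i \<notin> J \<longrightarrow> x$i = 0)}"

definition is_simplex :: "nat \<Rightarrow> (real^'n) set \<Rightarrow> bool" where
  "is_simplex k S \<longleftrightarrow> finite S \<and> card S = k + 1 \<and> \<not> affine_dependent S"

definition B_simplex :: "'n set \<Rightarrow> nat \<Rightarrow> (real^'n) set \<Rightarrow> bool" where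
  "B_simplex J k S \<longleftrightarrow> S \<subseteq> lattice_orth J \<and> is_simplex k S \<and>
     (\<exists>i\<in>J. card {v\<in>S. v$i = 0} = k \<and> (\<forall>v\<in>S. v$i \<noteq> 0 \<longrightarrow> v$i = 1))"

definition B_facet :: "(real^'n) set \<Rightarrow> bool" where
  "B_facet \<tau> \<longleftrightarrow> finite \<tau> \<and> \<tau> \<subseteq> lattice_orth UNIV \<and>
     (\<exists>a b. (\<forall>j. a$j > 0) \<and> affine hull \<tau> = {x. a \<bullet> x = b}) \<and>
     (\<forall>S. S \<subseteq> \<tau> \<and> is_simplex (CARD('n) - 1) S \<longrightarrow> B_simplex UNIV (CARD('n) - 1) S)"

definition face_of_set :: "(real^'n) set \<Rightarrow> (real^'n) set \<Rightarrow> bool" where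
  "face_of_set F P \<longleftrightarrow> (\<exists>G. G face_of convex hull P \<and> F = P \<inter> G)"

definition coord_subspace :: "'n set \<Rightarrow> (real^'n) set" where
  "coord_subspace S = span ((\<lambda>i. axis i 1) ` S)"

definition V_face_in :: "(real^'n) set \<Rightarrow> 'n set \<Rightarrow> (real^'n) set \<Rightarrow> bool" where
  "V_face_in \<tau> S F \<longleftrightarrow> face_of_set F \<tau> \<and> F \<subseteq> coord_subspace S \<and>
     int (dim (coord_subspace S)) = aff_dim F + 1"

definition B_face_in :: "(real^'n) set \<Rightarrow> 'n set \<Rightarrow> (real^'n) set \<Rightarrow> bool" where
  "B_face_in \<tau> S F \<longleftrightarrow> V_face_in \<tau> S F \<and>
     (\<forall>k T. int k = aff_dim F \<and> T \<subseteq> F \<and> is_simplex k T \<longrightarrow> B_simplex S k T)"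

definition B_polytope :: "'n set \<Rightarrow> (real^'n) set \<Rightarrow> bool" where
  "B_polytope J P \<longleftrightarrow> finite P \<and> P \<subseteq> lattice_orth J \<and> aff_dim P = int (card J) \<and>
     (\<forall>T. T \<subseteq> P \<and> is_simplex (card J - 1) T \<longrightarrow>
        B_simplex J (card J - 1) T \<or> 0 \<in> affine hull T)"

definition proj_forget :: "'n set \<Rightarrow> real^'n \<Rightarrow> real^'n" where
  "proj_forget S x = (\<chi> i. if i \<in> S then 0 else x$i)"

end

theory Submission imports Defs begin

lemma coord_subspace_eq: "coord_subspace S = {x::real^'n. \<forall>i. i \<notin> S \<longrightarrow> x$i = 0}"
proof
  have "subspace {x::real^'n. \<forall>i. i \<notin> S \<longrightarrow> x$i = 0}"
    by (auto simp: subspace_def)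
  then show "coord_subspace S \<subseteq> {x::real^'n. \<forall>i. i \<notin> S \<longrightarrow> x$i = 0}"
    unfolding coord_subspace_def by (intro span_minimal) (auto simp: axis_def)
next
  show "{x::real^'n. \<forall>i. i \<notin> S \<longrightarrow> x$i = 0} \<subseteq> coord_subspace S"
  proof
    fix x :: "real^'n" assume x: "x \<in> {x. \<forall>i. i \<notin> S \<longrightarrow> x$i = 0}"
    have "x = (\<Sum>i\<in>S. x$i *\<^sub>R axis i 1)"
      using x by (auto simp: vec_eq_iff axis_def if_distrib[of "\<lambda>t. _ * t"] cong: if_cong)
    also have "\<dots> \<in> coord_subspace S"
      unfolding coord_subspace_def by (intro span_sum span_scale span_base) auto
    finally show "x \<in> coord_subspace S" .
  qed
qed

lemma dim_coord_subspace: "dim (coord_subspace (S::'n::finite set)) = card S"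
  unfolding coord_subspace_eq using dim_substandard_cart[of S] by (simp add: dim_vec_eq[symmetric])

lemma aff_indep_imp_indep:
  fixes Q :: "(real^'n) set"
  assumes "finite Q" "\<not> affine_dependent Q" "0 \<notin> affine hull Q"
  shows "independent Q"
proof
  assume "dependent Q"
  then obtain u where u: "(\<Sum>v\<in>Q. u v *\<^sub>R v) = 0" "\<exists>v\<in>Q. u v \<noteq> 0"
    using dependent_finite[OF assms(1)] by blast
  show False
  proof (cases "sum u Q = 0")
    case True
    then show False using assms(2) u affine_dependent_explicit_finite[OF assms(1)] by blast
  next
    case False
    have "sum (\<lambda>v. u v / sum u Q) Q = 1" using False by (simp add: sum_divide_distrib[symmetric])
    moreover have "(\<Sum>v\<in>Q. (u v / sum u Q) *\<^sub>R v) = 0"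
      using u(1) by (simp add: scaleR_sum_left[symmetric] divide_inverse mult.commute[of _ "inverse _"] scaleR_right.sum[symmetric] flip: scaleR_scaleR)
    ultimately have "0 \<in> affine hull Q" unfolding affine_hull_finite[OF assms(1)] by blast
    then show False using assms(3) by blast
  qed
qed

lemma zero_in_hull_of_comb:
  fixes A :: "(real^'n) set"
  assumes "finite A" "sum w A \<noteq> 0" "(\<Sum>v\<in>A. w v *\<^sub>R v) = 0"
  shows "0 \<in> affine hull A"
proof -
  have "sum (\<lambda>v. w v / sum w A) A = 1" using assms(2) by (simp add: sum_divide_distrib[symmetric])
  moreover have "(\<Sum>v\<in>A. (w v / sum w A) *\<^sub>R v) = 0"
    using assms(3) by (simp add: divide_inverse mult.commute[of _ "inverse _"] scaleR_right.sum[symmetric] flip: scaleR_scaleR)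
  ultimately show ?thesis unfolding affine_hull_finite[OF assms(1)] by blast
qed

lemma linear_proj_forget: "linear (proj_forget S)"
  by (rule linearI) (auto simp: proj_forget_def vec_eq_iff)

lemma proj_forget_nth: "i \<notin> S \<Longrightarrow> proj_forget S x $ i = x $ i"
  by (simp add: proj_forget_def)

lemma proj_forget_zero: "x \<in> coord_subspace S \<Longrightarrow> proj_forget S x = 0"
  by (auto simp: proj_forget_def vec_eq_iff coord_subspace_eq)

lemma proj_image_hyperplane:
  fixes a :: "real^'n"
  assumes "\<forall>j. a$j > 0" "s \<in> S"
  shows "proj_forget S ` {x. a \<bullet> x = b} = coord_subspace (UNIV - S)"
proof
  show "proj_forget S ` {x. a \<bullet> x = b} \<subseteq> coord_subspace (UNIV - S)"
    by (auto simp: coord_subspace_eq proj_forget_def)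
next
  show "coord_subspace (UNIV - S) \<subseteq> proj_forget S ` {x. a \<bullet> x = b}"
  proof
    fix y assume "y \<in> coord_subspace (UNIV - S)"
    then have y: "\<forall>i\<in>S. y$i = 0" by (auto simp: coord_subspace_eq)
    define t where "t = (b - a \<bullet> y) / a$s"
    define x where "x = y + t *\<^sub>R axis s 1"
    have "a$s \<noteq> 0" using assms(1) by (metis less_irrefl)
    then have "a \<bullet> x = b" by (simp add: x_def t_def inner_add_right inner_axis)
    moreover have "proj_forget S x = y"
      using y assms(2) by (auto simp: proj_forget_def x_def vec_eq_iff axis_def)
    ultimately show "y \<in> proj_forget S ` {x. a \<bullet> x = b}" by blast
  qed
qed

theorem lemma3p3:
  fixes \<tau> :: "(real^'n) set" and S :: "'n set"
  assumes "B_facet \<tau>"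
    and "V_face_in \<tau> S (coord_subspace S \<inter> \<tau>)"
    and "\<not> B_face_in \<tau> S (coord_subspace S \<inter> \<tau>)"
  shows "B_polytope (UNIV - S) (proj_forget S ` \<tau>)"
proof -
  define n where "n = CARD('n)"
  define J where "J = UNIV - S"
  define p where "p = proj_forget S"
  define F where "F = coord_subspace S \<inter> \<tau>"
  have fin: "finite \<tau>" and lat: "\<tau> \<subseteq> lattice_orth UNIV"
    and Bfac: "\<And>T. T \<subseteq> \<tau> \<Longrightarrow> is_simplex (n - 1) T \<Longrightarrow> B_simplex UNIV (n - 1) T"
    using assms(1) unfolding B_facet_def n_def by auto
  obtain a b where apos: "\<forall>j. a$j > (0::real)" and H: "affine hull \<tau> = {x. a \<bullet> x = b}"
    using assms(1) unfolding B_facet_def by auto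
  have dimF: "int (card S) = aff_dim F + 1"
    using assms(2) unfolding V_face_in_def F_def dim_coord_subspace by auto
  obtain k Q where kQ: "int k = aff_dim F" "Q \<subseteq> F" "is_simplex k Q" "\<not> B_simplex S k Q"
    using assms(2,3) unfolding B_face_in_def F_def by auto
  have kS: "card S = k + 1" using kQ(1) dimF by linarith
  have finQ: "finite Q" and cardQ: "card Q = card S" and indQ: "\<not> affine_dependent Q"
    using kQ(3) kS unfolding is_simplex_def by auto
  have QF: "Q \<subseteq> \<tau>" "Q \<subseteq> coord_subspace S" using kQ(2) F_def by auto
  have Sne: "S \<noteq> {}" using kS by auto
  have cardSJ: "card S + card J = n"
    unfolding n_def J_def by (metis add.commute card_Diff_subset card_mono finite subset_UNIV le_add_diff_inverse2 finite_subset)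
  have SnU: "S \<noteq> UNIV"
  proof
    assume SU: "S = UNIV"
    then have "Q \<subseteq> \<tau>" using QF by auto
    moreover have "is_simplex (n - 1) Q" using kQ(3) kS SU n_def by simp
    ultimately have "B_simplex UNIV (n - 1) Q" by (rule Bfac)
    then show False using kQ(4) kS SU n_def by simp
  qed
  have Jpos: "card J \<ge> 1"
  proof -
    have "J \<noteq> {}" using SnU unfolding J_def by auto
    then show ?thesis by (simp add: Suc_leI card_gt_0_iff)
  qed
  have b0: "b \<noteq> 0"
  proof
    assume "b = 0"
    have "\<tau> \<subseteq> {0}"
    proof
      fix x assume x: "x \<in> \<tau>"
      then have "x \<in> affine hull \<tau>" by (rule hull_inc)
      then have "a \<bullet> x = 0" using H \<open>b = 0\<close> by simp
      moreover have "\<forall>j. x$j \<ge> 0" using x lat unfolding lattice_orth_def by auto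
      ultimately have "\<forall>j. a$j * x$j = 0"
        using apos by (subst (asm) inner_vec_def) (simp add: sum_nonneg_eq_0_iff less_imp_le)
      then have "x = 0" using apos by (auto simp: vec_eq_iff) (metis less_irrefl)
      then show "x \<in> {0}" by simp
    qed
    then have "aff_dim \<tau> \<le> 0" using aff_dim_subset[of \<tau> "{0}"] by simp
    moreover have "a \<noteq> 0" using apos by (metis less_irrefl zero_index)
    then have "aff_dim \<tau> = int n - 1" using H aff_dim_affine_hull[of \<tau>] by (simp add: n_def)
    ultimately show False using cardSJ Jpos Sne kS by linarith
  qed
  have lin: "linear p" unfolding p_def by (rule linear_proj_forget)
  have latP: "p ` \<tau> \<subseteq> lattice_orth J"
    using lat by (auto simp: lattice_orth_def p_def proj_forget_def J_def)
  have affP: "aff_dim (p ` \<tau>) = int (card J)"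
  proof -
    obtain s where "s \<in> S" using Sne by auto
    have "affine hull (p ` \<tau>) = p ` (affine hull \<tau>)" using affine_hull_linear_image[OF lin[unfolded linear_conv_bounded_linear]] by simp
    also have "\<dots> = coord_subspace J" unfolding H p_def J_def by (rule proj_image_hyperplane[OF apos \<open>s \<in> S\<close>])
    finally have "aff_dim (p ` \<tau>) = aff_dim (coord_subspace J)" by (metis aff_dim_affine_hull)
    also have "\<dots> = int (card J)"
      using aff_dim_subspace[OF subspace_span[of "(\<lambda>i. axis i 1) ` J"]] dim_coord_subspace[of J]
      unfolding coord_subspace_def by (metis dim_span)
    finally show ?thesis .
  qed
  have main: "B_simplex J (card J - 1) T \<or> 0 \<in> affine hull T"
    if T: "T \<subseteq> p ` \<tau>" "is_simplex (card J - 1) T" for T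
  proof (rule disjCI)
    assume T0: "0 \<notin> affine hull T"
    have finT: "finite T" and cardT: "card T = card J" and indT: "\<not> affine_dependent T"
      using T(2) Jpos unfolding is_simplex_def by auto
    have "\<forall>t\<in>T. \<exists>v. v \<in> \<tau> \<and> p v = t" using T(1) by auto
    then obtain l where l: "\<And>t. t \<in> T \<Longrightarrow> l t \<in> \<tau> \<and> p (l t) = t" by metis
    define L where "L = l ` T"
    have injl: "inj_on l T" using l by (metis inj_onI)
    have cardL: "card L = card J" unfolding L_def using card_image[OF injl] cardT by simp
    have finL: "finite L" unfolding L_def using finT by simp
    have injp: "inj_on p L" unfolding L_def using l by (auto simp: inj_on_def)
    have pL: "p ` L = T" unfolding L_def using l by force
    have pQ: "\<And>v. v \<in> Q \<Longrightarrow> p v = 0" using QF(2) p_def proj_forget_zero by blast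
    have disj: "L \<inter> Q = {}"
    proof (rule ccontr)
      assume "L \<inter> Q \<noteq> {}"
      then obtain v where "v \<in> L" "v \<in> Q" by auto
      then have "0 \<in> T" using pL pQ by force
      then show False using T0 hull_inc[of 0 T] by blast
    qed
    define U where "U = L \<union> Q"
    have finU: "finite U" using finL finQ U_def by simp
    have cardU: "card U = n" unfolding U_def using card_Un_disjoint[OF finL finQ disj] cardL cardQ cardSJ by simp
    have UT: "U \<subseteq> \<tau>" unfolding U_def L_def using l QF by auto
    have indU: "\<not> affine_dependent U"
    proof
      assume "affine_dependent U"
      then obtain u where u: "sum u U = 0" "\<exists>v\<in>U. u v \<noteq> 0" "(\<Sum>v\<in>U. u v *\<^sub>R v) = 0"
        using affine_dependent_explicit_finite[OF finU] by blast
      have "p (\<Sum>v\<in>U. u v *\<^sub>R v) = (\<Sum>v\<in>U. u v *\<^sub>R p v)"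
        using lin by (simp add: linear_sum linear_scale)
      then have "(\<Sum>v\<in>U. u v *\<^sub>R p v) = 0" using u(3) lin linear_0 by metis
      moreover have "(\<Sum>v\<in>U. u v *\<^sub>R p v) = (\<Sum>v\<in>L. u v *\<^sub>R p v) + (\<Sum>v\<in>Q. u v *\<^sub>R p v)"
        unfolding U_def by (rule sum.union_disjoint[OF finL finQ disj])
      moreover have "(\<Sum>v\<in>Q. u v *\<^sub>R p v) = 0" using pQ by simp
      ultimately have sL: "(\<Sum>v\<in>L. u v *\<^sub>R p v) = 0" by simp
      have "(\<Sum>v\<in>L. u v *\<^sub>R p v) = (\<Sum>t\<in>T. u (l t) *\<^sub>R t)"
        unfolding L_def using sum.reindex[OF injl, of "\<lambda>v. u v *\<^sub>R p v"] l by simp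
      then have sT: "(\<Sum>t\<in>T. u (l t) *\<^sub>R t) = 0" using sL by simp
      have "sum (\<lambda>t. u (l t)) T = 0"
        using zero_in_hull_of_comb[OF finT _ sT] T0 by blast
      then have "\<forall>t\<in>T. u (l t) = 0"
        using indT sT affine_dependent_explicit_finite[OF finT] by blast
      then have uL: "\<forall>v\<in>L. u v = 0" unfolding L_def by auto
      have "sum u U = sum u L + sum u Q" unfolding U_def by (rule sum.union_disjoint[OF finL finQ disj])
      then have s1: "sum u Q = 0" using u(1) uL by simp
      have "(\<Sum>v\<in>U. u v *\<^sub>R v) = (\<Sum>v\<in>L. u v *\<^sub>R v) + (\<Sum>v\<in>Q. u v *\<^sub>R v)"
        unfolding U_def by (rule sum.union_disjoint[OF finL finQ disj])
      then have s2: "(\<Sum>v\<in>Q. u v *\<^sub>R v) = 0" using u(3) uL by simp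
      have "\<forall>v\<in>Q. u v = 0" using indQ s1 s2 affine_dependent_explicit_finite[OF finQ] by blast
      then show False using u(2) uL U_def by auto
    qed
    have "is_simplex (n - 1) U" unfolding is_simplex_def using finU cardU indU cardSJ Jpos by simp
    then have "B_simplex UNIV (n - 1) U" using Bfac UT by blast
    then obtain i where i: "card {v\<in>U. v$i = 0} = n - 1" "\<forall>v\<in>U. v$i \<noteq> 0 \<longrightarrow> v$i = 1"
      unfolding B_simplex_def by auto
    define Z where "Z = {v\<in>U. v$i = 0}"
    have ZU: "Z \<subseteq> U" unfolding Z_def by auto
    have finZ: "finite Z" using finU ZU by (rule finite_subset[rotated])
    have "card (U - Z) = card U - card Z" by (rule card_Diff_subset[OF finZ ZU])
    moreover have "card Z = n - 1" using i(1) Z_def by simp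
    moreover have "n \<ge> 1" using cardSJ Jpos by simp
    ultimately have "card (U - Z) = 1" using cardU by simp
    then obtain w where w: "U - Z = {w}" using card_1_singletonE by blast
    show "B_simplex J (card J - 1) T"
    proof (cases "i \<in> S")
      case False
      have Qz: "\<forall>q\<in>Q. q$i = 0" using QF(2) False by (auto simp: coord_subspace_eq)
      have ZLQ: "Z = {v\<in>L. v$i = 0} \<union> Q" unfolding Z_def U_def using Qz by auto
      have "card Z = card {v\<in>L. v$i = 0} + card Q"
        unfolding ZLQ using disj finL finQ by (intro card_Un_disjoint) auto
      then have c1: "card {v\<in>L. v$i = 0} = card J - 1" using i(1) Z_def cardQ cardSJ by simp
      have "{t\<in>T. t$i = 0} = p ` {v\<in>L. v$i = 0}"
        using pL False by (auto simp: p_def proj_forget_nth)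
      moreover have "card (p ` {v\<in>L. v$i = 0}) = card {v\<in>L. v$i = 0}"
        by (rule card_image) (rule inj_on_subset[OF injp], auto)
      ultimately have c2: "card {t\<in>T. t$i = 0} = card J - 1" using c1 by simp
      have c3: "\<forall>t\<in>T. t$i \<noteq> 0 \<longrightarrow> t$i = 1"
        using pL i(2) False unfolding U_def by (auto simp: p_def proj_forget_nth)
      have "T \<subseteq> lattice_orth J" using T(1) latP by auto
      moreover have "i \<in> J" using False J_def by simp
      ultimately show ?thesis unfolding B_simplex_def using T(2) c2 c3 by blast
    next
      case True
      have Uw: "\<And>v. v \<in> U \<Longrightarrow> (v$i \<noteq> 0) = (v = w)"
      proof -
        fix v assume v: "v \<in> U"
        have "(v$i \<noteq> 0) = (v \<in> U - Z)" using v unfolding Z_def by simp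
        also have "\<dots> = (v = w)" using w by simp
        finally show "(v$i \<noteq> 0) = (v = w)" .
      qed
      have QU: "\<And>v. v \<in> Q \<Longrightarrow> v \<in> U" unfolding U_def by simp
      show ?thesis
      proof (cases "w \<in> Q")
        case wQ: True
        have "{v\<in>Q. v$i = 0} = Q - {w}" using Uw QU by blast
        then have c1: "card {v\<in>Q. v$i = 0} = k" using wQ finQ cardQ kS by simp
        have c2: "\<forall>v\<in>Q. v$i \<noteq> 0 \<longrightarrow> v$i = 1" using i(2) QU by blast
        have latQ: "Q \<subseteq> lattice_orth S"
          using QF lat by (auto simp: lattice_orth_def coord_subspace_eq)
        have ex: "\<exists>i\<in>S. card {v\<in>Q. v$i = 0} = k \<and> (\<forall>v\<in>Q. v$i \<noteq> 0 \<longrightarrow> v$i = 1)"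
          using True c1 c2 by blast
        have "B_simplex S k Q" unfolding B_simplex_def by (rule conjI[OF latQ conjI[OF kQ(3) ex]])
        then show ?thesis using kQ(4) by simp
      next
        case wQ: False
        have Qz: "\<forall>q\<in>Q. q$i = 0" using Uw QU wQ by blast
        then have QS: "Q \<subseteq> coord_subspace (S - {i})" using QF(2) by (auto simp: coord_subspace_eq)
        have "affine hull Q \<subseteq> affine hull \<tau>" by (rule hull_mono[OF QF(1)])
        then have "0 \<notin> affine hull Q" using H b0 by auto
        then have "independent Q" by (rule aff_indep_imp_indep[OF finQ indQ])
        then have "card Q \<le> dim (coord_subspace (S - {i}))" by (rule independent_card_le_dim[OF QS])
        then have "card Q \<le> card S - 1" by (simp add: dim_coord_subspace True)
        then show ?thesis using cardQ kS by simp
      qed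
    qed
  qed
  show ?thesis
    unfolding B_polytope_def p_def[symmetric] J_def[symmetric]
    using fin latP affP main by auto
qed
end
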